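(* There exist a constant $c_0\in(0,1)$ and a 1-sided error, nonadaptive, $t$-online-erasure-resilient $\varepsilon$-tester for linearity of functions $f:\{0,1\}^d\to\{0,1\}$ that is correct whenever $t\le c_0\cdot\varepsilon\cdot 2^{d/4}$ and makes $O(t/\varepsilon)$ queries.
   Context: Online-erasure model. An input is a function $f:D\to R$ on a finite domain $D$. An algorithm accesses $f$ only through an oracle $\mathcal{O}$ by querying points $x\in D$ one at a time and receiving $\mathcal{O}(x)$. Initially $\mathcal{O}(x)=f(x)$ for all $x\in D$. For $t\in\mathbb{N}$, a $t$-online-erasure oracle, after answering each query, may choose up to $t$ points $x\in D$ and set $\mathcal{O}(x)=\perp$ (a special "erased" symbol); these values are used to answer all future queries. The choice of erasures (the adversarial strategy) may depend on $f$, on the queries and answers so far, and on the algorithm's code, but not on the algorithm's future random coins; the algorithm does not know where erasures are. A property $\mathcal{P}$ is a set of functions; $f$ is $\varepsilon$-far from $\mathcal{P}$ if for every $g\in\mathcal{P}$, $f$ and $g$ differ on at least an $\varepsilon$ fraction of $D$. A $t$-online-erasure-resilient $\varepsilon$-tester for $\mathcal{P}$ is a randomized algorithm that, given $t,\varepsilon$ and access to $f$ via a $t$-online-erasure oracle, for every adversarial strategy accepts with probability at least $2/3$ if $f\in\mathcal{P}$ and rejects with probability at least $2/3$ if $f$ is $\varepsilon$-far from $\mathcal{P}$. It has 1-sided error if it accepts every $f\in\mathcal{P}$ with probability 1; it is nonadaptive if its queries do not depend on answers to previous queries. A function $f:\{0,1\}^d\to\{0,1\}$ is linear if there is $S\subseteq[d]$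 with $f(x)=\sum_{i\in S}x[i]\bmod 2$ for all $x$. *)

theory Defs
  imports "HOL-Probability.Probability"
begin

text \<open>Points of the hypercube are bit lists of length d; a function f : {0,1}^d -> {0,1}
  is represented as a total function on bit lists of which only the values on the
  domain matter.  The erased symbol is None; an unerased answer is Some (f x).\<close>

definition cube :: "nat \<Rightarrow> bool list set" where
  "cube d = {x. length x = d}"

definition is_linear_fn :: "nat \<Rightarrow> (bool list \<Rightarrow> bool) \<Rightarrow> bool" where
  "is_linear_fn d f \<longleftrightarrow>
     (\<exists>S \<subseteq> {..<d}. \<forall>x \<in> cube d. f x = odd (card {i \<in> S. x ! i}))"

definition eps_far_linear :: "real \<Rightarrow> nat \<Rightarrow> (bool list \<Rightarrow> bool) \<Rightarrow> bool" where
  "eps_far_linear \<epsilon> d f \<longleftrightarrow>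
     (\<forall>g. is_linear_fn d g \<longrightarrow> real (card {x \<in> cube d. f x \<noteq> g x}) \<ge> \<epsilon> * 2 ^ d)"

text \<open>An adversary (online-erasure strategy) maps the history of (query, answer) pairs
  seen so far to the set of points it erases after answering the last query.
  It may depend on f and on the algorithm because it is quantified after them.\<close>
type_synonym adversary = "(bool list \<times> bool option) list \<Rightarrow> bool list set"

definition valid_adversary :: "nat \<Rightarrow> adversary \<Rightarrow> bool" where
  "valid_adversary t adv \<longleftrightarrow> (\<forall>h. finite (adv h) \<and> card (adv h) \<le> t)"

fun oracle_run :: "(bool list \<Rightarrow> bool) \<Rightarrow> adversary \<Rightarrow> bool list set \<Rightarrow>
    (bool list \<times> bool option) list \<Rightarrow> bool list list \<Rightarrow> bool option list" where
  "oracle_run f adv E h [] = []"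
| "oracle_run f adv E h (q # qs) =
     (let a = (if q \<in> E then None else Some (f q));
          h' = h @ [(q, a)]
      in a # oracle_run f adv (E \<union> adv h') h' qs)"

definition answers :: "(bool list \<Rightarrow> bool) \<Rightarrow> adversary \<Rightarrow> bool list list \<Rightarrow> bool option list" where
  "answers f adv qs = oracle_run f adv {} [] qs"

text \<open>A nonadaptive randomized algorithm: its random coins determine the full query
  sequence and a decision rule (True = accept) applied to the received answers.\<close>
type_synonym nonadaptive_alg = "(bool list list \<times> (bool option list \<Rightarrow> bool)) pmf"

definition accept_prob :: "nonadaptive_alg \<Rightarrow> (bool list \<Rightarrow> bool) \<Rightarrow> adversary \<Rightarrow> real" where
  "accept_prob A f adv = measure_pmf.prob A {(qs, dec). dec (answers f adv qs)}"

end

theory Submission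
  imports Defs
begin


lemma prob_bind_le2:
  fixes M :: "'a pmf" and N :: "'a \<Rightarrow> 'b pmf"
  assumes "\<And>x. x \<in> set_pmf M \<Longrightarrow> x \<notin> B \<Longrightarrow> measure_pmf.prob (N x) A \<le> c" "0 \<le> c"
  shows "measure_pmf.prob (bind_pmf M N) A \<le> measure_pmf.prob M B + c"
proof -
  have "emeasure (bind_pmf M N) A = (\<integral>\<^sup>+x. emeasure (N x) A \<partial>M)" by simp
  also have "\<dots> \<le> (\<integral>\<^sup>+x. (indicator B x + ennreal c) \<partial>M)"
  proof (rule nn_integral_mono_AE)
    show "AE x in measure_pmf M. emeasure (measure_pmf (N x)) A \<le> indicator B x + ennreal c"
    proof (rule AE_pmfI)
      fix x assume x: "x \<in> set_pmf M"
      show "emeasure (measure_pmf (N x)) A \<le> indicator B x + ennreal c"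
      proof (cases "x \<in> B")
        case True
        have "emeasure (measure_pmf (N x)) A \<le> 1" by (simp add: measure_pmf.emeasure_le_1)
        then show ?thesis using True by (simp add: add_increasing2)
      next
        case False
        then show ?thesis using assms(1)[OF x False]
          by (simp add: measure_pmf.emeasure_eq_measure ennreal_leI)
      qed
    qed
  qed
  also have "\<dots> = emeasure M B + ennreal c"
    by (subst nn_integral_add) (auto simp: measure_pmf.emeasure_space_1)
  also have "\<dots> = ennreal (measure_pmf.prob M B + c)"
    using assms(2) by (simp add: measure_pmf.emeasure_eq_measure ennreal_plus)
  finally have "ennreal (measure_pmf.prob (bind_pmf M N) A) \<le> ennreal (measure_pmf.prob M B + c)"
    by (simp add: measure_pmf.emeasure_eq_measure)
  then show ?thesis
    using assms(2) by (metis add_nonneg_nonneg ennreal_le_iff measure_nonneg)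
qed

lemma prob_bind_le1:
  fixes M :: "'a pmf" and N :: "'a \<Rightarrow> 'b pmf"
  assumes "\<And>x. x \<in> set_pmf M \<Longrightarrow> measure_pmf.prob (N x) A \<le> c"
  shows "measure_pmf.prob (bind_pmf M N) A \<le> c"
proof -
  obtain x where x: "x \<in> set_pmf M" using set_pmf_not_empty[of M] by blast
  have c: "0 \<le> c" using assms[OF x] measure_nonneg order_trans by blast
  have "measure_pmf.prob (bind_pmf M N) A \<le> measure_pmf.prob M {} + c"
    by (rule prob_bind_le2) (use assms c in auto)
  then show ?thesis by simp
qed

lemma prob_bind_le3:
  fixes M :: "'a pmf" and N :: "'a \<Rightarrow> 'b pmf"
  assumes "\<And>x. x \<in> set_pmf M \<Longrightarrow> x \<in> B \<Longrightarrow> measure_pmf.prob (N x) A \<le> c"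
    "\<And>x. x \<in> set_pmf M \<Longrightarrow> x \<notin> B \<Longrightarrow> measure_pmf.prob (N x) A = 0" "0 \<le> c"
  shows "measure_pmf.prob (bind_pmf M N) A \<le> c * measure_pmf.prob M B"
proof -
  have "emeasure (bind_pmf M N) A = (\<integral>\<^sup>+x. emeasure (N x) A \<partial>M)" by simp
  also have "\<dots> \<le> (\<integral>\<^sup>+x. ennreal c * indicator B x \<partial>M)"
  proof (rule nn_integral_mono_AE)
    show "AE x in measure_pmf M. emeasure (measure_pmf (N x)) A \<le> ennreal c * indicator B x"
    proof (rule AE_pmfI)
      fix x assume x: "x \<in> set_pmf M"
      show "emeasure (measure_pmf (N x)) A \<le> ennreal c * indicator B x"
        using assms(1)[OF x] assms(2)[OF x]
        by (cases "x \<in> B") (auto simp: measure_pmf.emeasure_eq_measure ennreal_leI)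
    qed
  qed
  also have "\<dots> = ennreal c * emeasure M B"
    by (simp add: nn_integral_cmult_indicator)
  also have "\<dots> = ennreal (c * measure_pmf.prob M B)"
    using assms(3) by (simp add: measure_pmf.emeasure_eq_measure ennreal_mult)
  finally show ?thesis
    using assms(3) by (simp add: measure_pmf.emeasure_eq_measure)
qed


definition xorl :: "bool list \<Rightarrow> bool list \<Rightarrow> bool list" where
  "xorl x y = map2 (\<noteq>) x y"

lemma length_xorl[simp]: "length (xorl x y) = min (length x) (length y)"
  by (simp add: xorl_def)

lemma nth_xorl[simp]: "i < length x \<Longrightarrow> i < length y \<Longrightarrow> xorl x y ! i = (x ! i \<noteq> y ! i)"
  by (simp add: xorl_def)

lemma cube_xorl[intro]: "x \<in> cube d \<Longrightarrow> y \<in> cube d \<Longrightarrow> xorl x y \<in> cube d"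
  by (simp add: cube_def)

lemma xorl_comm: "xorl x y = xorl y x"
  by (rule nth_equalityI) auto

lemma xorl_assoc: "xorl (xorl x y) z = xorl x (xorl y z)"
  by (rule nth_equalityI) auto

lemma xorl_cancel: "length a = length y \<Longrightarrow> xorl a (xorl a y) = y"
  by (rule nth_equalityI) auto

lemma xorl_cancel2: "length a = length y \<Longrightarrow> xorl (xorl y a) a = y"
  by (rule nth_equalityI) auto

lemma finite_cube[simp]: "finite (cube d)"
  unfolding cube_def using finite_lists_length_eq[of "UNIV::bool set" d] by simp

lemma card_cube: "card (cube d) = 2 ^ d"
  unfolding cube_def using card_lists_length_eq[of "UNIV::bool set" d] by simp

lemma cube_nonempty: "cube d \<noteq> {}"
  using card_cube[of d] by auto

lemma odd_card_symdiff:
  assumes "finite A" "finite B"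
  shows "odd (card {i. (i \<in> A) \<noteq> (i \<in> B)}) = (odd (card A) \<noteq> odd (card B))"
proof -
  have e: "{i. (i \<in> A) \<noteq> (i \<in> B)} = (A - B) \<union> (B - A)" by auto
  have c1: "card ((A - B) \<union> (B - A)) = card (A - B) + card (B - A)"
    by (rule card_Un_disjoint) (use assms in auto)
  have c2: "card A = card (A - B) + card (A \<inter> B)"
    using assms by (metis Diff_Diff_Int card_Diff_subset_Int card_mono Int_lower1 le_add_diff_inverse2 finite_Int
        inf_commute card_Diff_subset)
  have c3: "card B = card (B - A) + card (A \<inter> B)"
    using assms by (metis Int_commute Diff_Diff_Int card_Diff_subset_Int card_mono Int_lower1 le_add_diff_inverse2 finite_Int
        card_Diff_subset)
  show ?thesis unfolding e c1 c2 c3 by auto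
qed

lemma linear_additive:
  assumes "is_linear_fn d f" "x \<in> cube d" "y \<in> cube d"
  shows "f (xorl x y) = (f x \<noteq> f y)"
proof -
  obtain S where S: "S \<subseteq> {..<d}" "\<forall>x\<in>cube d. f x = odd (card {i \<in> S. x ! i})"
    using assms(1) unfolding is_linear_fn_def by blast
  have fS: "finite S" using S(1) finite_subset by blast
  have lx: "length x = d" "length y = d" using assms by (auto simp: cube_def)
  have "{i \<in> S. xorl x y ! i} = {i. (i \<in> {i \<in> S. x ! i}) \<noteq> (i \<in> {i \<in> S. y ! i})}"
    using S(1) lx by auto
  moreover have "f (xorl x y) = odd (card {i \<in> S. xorl x y ! i})"
    using S(2) assms cube_xorl by blast
  ultimately have "f (xorl x y) = odd (card {i. (i \<in> {i \<in> S. x ! i}) \<noteq> (i \<in> {i \<in> S. y ! i})})"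
    by simp
  also have "\<dots> = (f x \<noteq> f y)"
    by (subst odd_card_symdiff) (use fS S(2) assms in auto)
  finally show ?thesis .
qed

definition zerol :: "nat \<Rightarrow> bool list" where "zerol d = replicate d False"
definition unitl :: "nat \<Rightarrow> nat \<Rightarrow> bool list" where "unitl d i = map (\<lambda>j. j = i) [0..<d]"
definition truncl :: "nat \<Rightarrow> bool list \<Rightarrow> bool list" where
  "truncl k x = map (\<lambda>j. x ! j \<and> j < k) [0..<length x]"

lemma additive_linear:
  assumes add: "\<And>a b. a \<in> cube d \<Longrightarrow> b \<in> cube d \<Longrightarrow> g (xorl a b) = (g a \<noteq> g b)"
  shows "is_linear_fn d g"
proof -
  define S where "S = {i. i < d \<and> g (unitl d i)}"
  have zc: "zerol d \<in> cube d" by (simp add: zerol_def cube_def)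
  have "g (xorl (zerol d) (zerol d)) = (g (zerol d) \<noteq> g (zerol d))" using add zc by blast
  moreover have "xorl (zerol d) (zerol d) = zerol d" by (rule nth_equalityI) (auto simp: zerol_def)
  ultimately have g0: "g (zerol d) = False" by simp
  have main: "\<And>k. k \<le> d \<Longrightarrow> g (truncl k x) = odd (card {i \<in> S. x ! i \<and> i < k})" if x: "x \<in> cube d" for x
  proof -
    fix k assume "k \<le> d" then show "g (truncl k x) = odd (card {i \<in> S. x ! i \<and> i < k})"
    proof (induction k)
      case 0
      have "truncl 0 x = zerol d" using x by (auto simp: truncl_def zerol_def cube_def intro: nth_equalityI)
      then show ?case using g0 by simp
    next
      case (Suc k)
      have lx: "length x = d" using x by (simp add: cube_def)
      have tc: "truncl k x \<in> cube d" using lx by (simp add: truncl_def cube_def)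
      show ?case
      proof (cases "x ! k")
        case True
        have eq: "truncl (Suc k) x = xorl (truncl k x) (unitl d k)"
          using Suc.prems lx True by (auto simp: truncl_def unitl_def intro!: nth_equalityI)
        have uc: "unitl d k \<in> cube d" by (simp add: unitl_def cube_def)
        have g1: "g (truncl (Suc k) x) = (g (truncl k x) \<noteq> g (unitl d k))"
          unfolding eq using add tc uc by blast
        show ?thesis
        proof (cases "k \<in> S")
          case kS: True
          have "{i \<in> S. x ! i \<and> i < Suc k} = insert k {i \<in> S. x ! i \<and> i < k}"
            using kS True by auto
          moreover have "finite {i \<in> S. x ! i \<and> i < k}" by simp
          ultimately have "card {i \<in> S. x ! i \<and> i < Suc k} = Suc (card {i \<in> S. x ! i \<and> i < k})"
            by simp
          then show ?thesis using g1 Suc kS S_def by simp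
        next
          case kS: False
          have "{i \<in> S. x ! i \<and> i < Suc k} = {i \<in> S. x ! i \<and> i < k}"
            using kS by (auto simp: less_Suc_eq)
          then show ?thesis using g1 Suc kS S_def Suc.prems by simp
        qed
      next
        case False
        have eq: "truncl (Suc k) x = truncl k x"
          using False by (auto simp: truncl_def less_Suc_eq intro!: nth_equalityI)
        have "{i \<in> S. x ! i \<and> i < Suc k} = {i \<in> S. x ! i \<and> i < k}"
          using False by (auto simp: less_Suc_eq)
        then show ?thesis using eq Suc by simp
      qed
    qed
  qed
  show ?thesis unfolding is_linear_fn_def
  proof (intro exI[of _ S] conjI ballI)
    show "S \<subseteq> {..<d}" by (auto simp: S_def)
  next
    fix x assume x: "x \<in> cube d"
    have lx: "length x = d" using x by (simp add: cube_def)
    have "truncl d x = x" using lx by (auto simp: truncl_def intro!: nth_equalityI)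
    moreover have "{i \<in> S. x ! i \<and> i < d} = {i \<in> S. x ! i}" by (auto simp: S_def)
    ultimately show "g x = odd (card {i \<in> S. x ! i})" using main[OF x, of d] by simp
  qed
qed


definition okt :: "(bool list \<Rightarrow> bool) \<Rightarrow> bool list \<Rightarrow> bool list \<Rightarrow> bool" where
  "okt f x y \<longleftrightarrow> (f x \<noteq> f y) = f (xorl x y)"

definition Bd :: "(bool list \<Rightarrow> bool) \<Rightarrow> nat \<Rightarrow> (bool list \<times> bool list) set" where
  "Bd f d = {(x,y) \<in> cube d \<times> cube d. \<not> okt f x y}"

lemma inj_xorl: "a \<in> cube d \<Longrightarrow> inj_on (xorl a) (cube d)"
  unfolding inj_on_def cube_def by (metis mem_Collect_eq xorl_cancel)

context
  fixes f :: "bool list \<Rightarrow> bool" and d :: nat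
begin

private definition "DD a y \<longleftrightarrow> (f (xorl a y) \<noteq> f y)"
private definition "gg a \<longleftrightarrow> card (cube d) \<le> 2 * card {y \<in> cube d. DD a y}"

private lemma okt_DD: "okt f x y \<longleftrightarrow> DD x y = f x"
  unfolding okt_def DD_def by auto

private lemma half: "2 * card {y \<in> cube d. DD a y \<noteq> gg a} \<le> card (cube d)"
proof (cases "gg a")
  case True
  have "{y \<in> cube d. DD a y \<noteq> gg a} = cube d - {y \<in> cube d. DD a y}" using True by auto
  then have "card {y \<in> cube d. DD a y \<noteq> gg a} = card (cube d) - card {y \<in> cube d. DD a y}"
    by (simp add: card_Diff_subset)
  then show ?thesis using True unfolding gg_def by simp
next
  case False
  have "{y \<in> cube d. DD a y \<noteq> gg a} = {y \<in> cube d. DD a y}" using False by auto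
  then show ?thesis using False unfolding gg_def by simp
qed

private lemma dist_bound: "card {x \<in> cube d. f x \<noteq> gg x} * card (cube d) \<le> 2 * card (Bd f d)"
proof -
  let ?V = "cube d"
  let ?W = "{x \<in> cube d. f x \<noteq> gg x}"
  have "Bd f d = Sigma ?V (\<lambda>x. {y \<in> ?V. DD x y \<noteq> f x})"
    unfolding Bd_def by (auto simp: okt_DD)
  then have B: "card (Bd f d) = (\<Sum>x\<in>?V. card {y \<in> ?V. DD x y \<noteq> f x})"
    by (simp add: card_SigmaI)
  have "card ?W * card ?V = (\<Sum>x\<in>?W. card ?V)" by simp
  also have "\<dots> \<le> (\<Sum>x\<in>?W. 2 * card {y \<in> ?V. DD x y \<noteq> f x})"
  proof (rule sum_mono)
    fix x assume x: "x \<in> ?W"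
    have e: "{y \<in> ?V. DD x y \<noteq> f x} = ?V - {y \<in> ?V. DD x y \<noteq> gg x}" using x by auto
    have "card {y \<in> ?V. DD x y \<noteq> f x} = card ?V - card {y \<in> ?V. DD x y \<noteq> gg x}"
      unfolding e by (simp add: card_Diff_subset)
    then show "card ?V \<le> 2 * card {y \<in> ?V. DD x y \<noteq> f x}" using half[of x] by simp
  qed
  also have "\<dots> \<le> (\<Sum>x\<in>?V. 2 * card {y \<in> ?V. DD x y \<noteq> f x})"
    by (rule sum_mono2) auto
  also have "\<dots> = 2 * card (Bd f d)" using B by (simp add: sum_distrib_left)
  finally show ?thesis .
qed

private lemma inj_bound1:
  assumes a: "a \<in> cube d"
  shows "card {(y,z) \<in> cube d \<times> cube d. \<not> okt f (xorl a y) z} \<le> card (Bd f d)"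
proof (rule card_inj_on_le[where f = "\<lambda>(y,z). (xorl a y, z)"])
  show "inj_on (\<lambda>(y, z). (xorl a y, z)) {(y, z) \<in> cube d \<times> cube d. \<not> okt f (xorl a y) z}"
    using a by (auto simp: inj_on_def cube_def) (metis xorl_cancel)
  show "(\<lambda>(y, z). (xorl a y, z)) ` {(y, z) \<in> cube d \<times> cube d. \<not> okt f (xorl a y) z} \<subseteq> Bd f d"
    using a by (auto simp: Bd_def)
  show "finite (Bd f d)" unfolding Bd_def by (rule finite_subset[of _ "cube d \<times> cube d"]) auto
qed

private lemma inj_bound2:
  assumes a: "a \<in> cube d"
  shows "card {(y,z) \<in> cube d \<times> cube d. \<not> okt f y (xorl a z)} \<le> card (Bd f d)"
proof (rule card_inj_on_le[where f = "\<lambda>(y,z). (y, xorl a z)"])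
  show "inj_on (\<lambda>(y, z). (y, xorl a z)) {(y, z) \<in> cube d \<times> cube d. \<not> okt f y (xorl a z)}"
    using a by (auto simp: inj_on_def cube_def) (metis xorl_cancel)
  show "(\<lambda>(y, z). (y, xorl a z)) ` {(y, z) \<in> cube d \<times> cube d. \<not> okt f y (xorl a z)} \<subseteq> Bd f d"
    using a by (auto simp: Bd_def)
  show "finite (Bd f d)" unfolding Bd_def by (rule finite_subset[of _ "cube d \<times> cube d"]) auto
qed

private lemma row_bound:
  assumes a: "a \<in> cube d"
  shows "card {y \<in> cube d. DD a y \<noteq> gg a} * card (cube d) \<le> 4 * card (Bd f d)"
proof -
  let ?V = "cube d"
  let ?P = "{y \<in> ?V. DD a y \<noteq> gg a}"
  let ?Q = "{y \<in> ?V. DD a y = gg a}"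
  have eQ: "?Q = ?V - ?P" by auto
  have cQ: "card ?Q = card ?V - card ?P" unfolding eQ by (simp add: card_Diff_subset)
  have hQ: "card ?V \<le> 2 * card ?Q" using cQ half[of a] by simp
  have sub: "?P \<times> ?Q \<subseteq> {(y,z) \<in> ?V \<times> ?V. \<not> okt f (xorl a y) z} \<union> {(y,z) \<in> ?V \<times> ?V. \<not> okt f y (xorl a z)}"
  proof
    fix p assume p: "p \<in> ?P \<times> ?Q"
    obtain y z where yz: "p = (y,z)" by force
    have y: "y \<in> ?V" and z: "z \<in> ?V" and dyz: "DD a y \<noteq> DD a z" using p yz by auto
    have ly: "length y = d" "length z = d" "length a = d" using y z a by (auto simp: cube_def)
    have e: "xorl (xorl a y) z = xorl y (xorl a z)"
      by (metis xorl_assoc xorl_comm)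
    have "\<not> okt f (xorl a y) z \<or> \<not> okt f y (xorl a z)"
      using dyz e unfolding okt_def DD_def by auto
    then show "p \<in> {(y,z) \<in> ?V \<times> ?V. \<not> okt f (xorl a y) z} \<union> {(y,z) \<in> ?V \<times> ?V. \<not> okt f y (xorl a z)}"
      using yz y z by auto
  qed
  have "card (?P \<times> ?Q) \<le> card ({(y,z) \<in> ?V \<times> ?V. \<not> okt f (xorl a y) z} \<union> {(y,z) \<in> ?V \<times> ?V. \<not> okt f y (xorl a z)})"
    by (rule card_mono[OF _ sub]) (rule finite_subset[of _ "?V \<times> ?V"], auto)
  also have "\<dots> \<le> card {(y,z) \<in> ?V \<times> ?V. \<not> okt f (xorl a y) z} + card {(y,z) \<in> ?V \<times> ?V. \<not> okt f y (xorl a z)}"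
    by (rule card_Un_le)
  also have "\<dots> \<le> 2 * card (Bd f d)" using inj_bound1[OF a] inj_bound2[OF a] by simp
  finally have "card ?P * card ?Q \<le> 2 * card (Bd f d)" by (metis card_cartesian_product)
  moreover have "card ?P * (2 * card ?Q) = 2 * (card ?P * card ?Q)" by (rule mult.left_commute)
  ultimately have "card ?P * (2 * card ?Q) \<le> 4 * card (Bd f d)" by linarith
  moreover have "card ?P * card ?V \<le> card ?P * (2 * card ?Q)" using hQ by simp
  ultimately show ?thesis by linarith
qed

private lemma gg_additive:
  assumes small: "12 * card (Bd f d) < card (cube d) * card (cube d)"
    and a: "a \<in> cube d" and b: "b \<in> cube d"
  shows "gg (xorl a b) = (gg a \<noteq> gg b)"
proof -
  let ?V = "cube d"
  let ?S1 = "{y \<in> ?V. DD a y \<noteq> gg a}"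
  let ?S2 = "{y \<in> ?V. DD b (xorl a y) \<noteq> gg b}"
  let ?S3 = "{y \<in> ?V. DD (xorl a b) y \<noteq> gg (xorl a b)}"
  have ab: "xorl a b \<in> ?V" using a b by auto
  have c2: "card ?S2 \<le> card {y \<in> ?V. DD b y \<noteq> gg b}"
  proof (rule card_inj_on_le[where f = "xorl a"])
    show "inj_on (xorl a) ?S2" using a by (intro inj_on_subset[OF inj_xorl]) auto
    show "xorl a ` ?S2 \<subseteq> {y \<in> ?V. DD b y \<noteq> gg b}" using a by auto
  qed simp
  have "card (?S1 \<union> ?S2 \<union> ?S3) * card ?V \<le> (card ?S1 + card ?S2 + card ?S3) * card ?V"
    by (intro mult_right_mono) (meson add_mono card_Un_le order_trans le_refl | simp)+
  also have "\<dots> = card ?S1 * card ?V + card ?S2 * card ?V + card ?S3 * card ?V"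
    by (simp add: algebra_simps)
  also have "\<dots> \<le> 4 * card (Bd f d) + 4 * card (Bd f d) + 4 * card (Bd f d)"
    using row_bound[OF a] row_bound[OF b] row_bound[OF ab] c2
    by (intro add_mono) (auto intro: order_trans[OF mult_right_mono])
  finally have "card (?S1 \<union> ?S2 \<union> ?S3) * card ?V < card ?V * card ?V" using small by linarith
  then have "card (?S1 \<union> ?S2 \<union> ?S3) < card ?V" by simp
  then have "\<not> ?V \<subseteq> ?S1 \<union> ?S2 \<union> ?S3"
    by (metis (no_types, lifting) card_mono finite_Un finite_cube leD finite_subset mem_Collect_eq subsetI)
  then obtain y where y: "y \<in> ?V" "y \<notin> ?S1" "y \<notin> ?S2" "y \<notin> ?S3" by blast
  have e: "xorl b (xorl a y) = xorl (xorl a b) y" by (metis xorl_assoc xorl_comm)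
  show ?thesis using y e unfolding DD_def by auto
qed

theorem BLR:
  assumes far: "eps_far_linear \<epsilon> d f" and e0: "0 < \<epsilon>" and e1: "\<epsilon> \<le> 1"
  shows "\<epsilon> / 12 * (real (card (cube d)))^2 \<le> real (card (Bd f d))"
proof (rule ccontr)
  assume "\<not> ?thesis"
  then have lt: "real (card (Bd f d)) < \<epsilon> / 12 * (real (card (cube d)))^2" by simp
  have "real (12 * card (Bd f d)) < real (card (cube d) * card (cube d))"
  proof -
    have "\<epsilon> / 12 * (real (card (cube d)))^2 \<le> 1/12 * (real (card (cube d)))^2"
      using e1 by (intro mult_right_mono) auto
    then show ?thesis using lt by (simp add: power2_eq_square)
  qed
  then have small: "12 * card (Bd f d) < card (cube d) * card (cube d)" by linarith
  have lin: "is_linear_fn d gg"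
    by (rule additive_linear) (rule gg_additive[OF small])
  have "\<epsilon> * 2 ^ d \<le> real (card {x \<in> cube d. f x \<noteq> gg x})"
    using far lin unfolding eps_far_linear_def by blast
  then have "\<epsilon> * real (card (cube d)) * real (card (cube d)) \<le> real (card {x \<in> cube d. f x \<noteq> gg x}) * real (card (cube d))"
    by (intro mult_right_mono) (auto simp: card_cube)
  also have "\<dots> \<le> 2 * real (card (Bd f d))"
    using dist_bound by (metis of_nat_le_iff of_nat_mult of_nat_numeral)
  finally have "\<epsilon> / 2 * (real (card (cube d)))^2 \<le> real (card (Bd f d))"
    by (simp add: power2_eq_square)
  moreover have "\<epsilon> / 12 * (real (card (cube d)))^2 \<le> \<epsilon> / 2 * (real (card (cube d)))^2"
    using e0 by (intro mult_right_mono) auto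
  ultimately show False using lt by linarith
qed

end


definition U :: "nat \<Rightarrow> bool list pmf" where "U d = pmf_of_set (cube d)"
definition X :: "nat \<Rightarrow> nat \<Rightarrow> (nat \<Rightarrow> bool list) pmf" where
  "X d m = Pi_pmf {..<m} [] (\<lambda>_. U d)"

lemma set_U[simp]: "set_pmf (U d) = cube d"
  unfolding U_def by (simp add: cube_nonempty)

lemma set_X: "x \<in> set_pmf (X d m) \<Longrightarrow> j < m \<Longrightarrow> x j \<in> cube d"
  unfolding X_def by (auto simp: set_Pi_pmf PiE_dflt_def)

lemma prob_U: "finite G \<Longrightarrow> measure_pmf.prob (U d) G \<le> real (card G) / 2 ^ d"
proof -
  assume G: "finite G"
  have "measure_pmf.prob (U d) G = real (card (cube d \<inter> G)) / real (card (cube d))"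
    unfolding U_def by (simp add: measure_pmf_of_set cube_nonempty)
  also have "\<dots> \<le> real (card G) / 2 ^ d"
    using G by (auto simp: card_cube intro!: divide_right_mono card_mono)
  finally show ?thesis .
qed

lemma X_split:
  assumes i: "i < m"
  shows "X d m = bind_pmf (Pi_pmf ({..<m} - {i}) [] (\<lambda>_. U d)) (\<lambda>f. map_pmf (\<lambda>y. f(i := y)) (U d))"
proof -
  have e: "{..<m} = insert i ({..<m} - {i})" using i by auto
  have "X d m = do {y \<leftarrow> U d; f \<leftarrow> Pi_pmf ({..<m} - {i}) [] (\<lambda>_. U d); return_pmf (f(i := y))}"
    unfolding X_def by (subst e, subst Pi_pmf_insert') auto
  also have "\<dots> = bind_pmf (Pi_pmf ({..<m} - {i}) [] (\<lambda>_. U d)) (\<lambda>f. map_pmf (\<lambda>y. f(i := y)) (U d))"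
    by (subst bind_commute_pmf) (simp add: map_pmf_def)
  finally show ?thesis .
qed

lemma PL1:
  assumes i: "i < m"
    and G: "\<And>x y. (\<And>j. j \<noteq> i \<Longrightarrow> x j = y j) \<Longrightarrow> G x = G y"
    and fin: "\<And>x. finite (G x)" and cardG: "\<And>x. card (G x) \<le> K"
    and E: "\<And>x. x \<in> set_pmf (X d m) \<Longrightarrow> x \<in> E \<Longrightarrow> x i \<in> G x"
  shows "measure_pmf.prob (X d m) E \<le> real K / 2 ^ d"
proof -
  have "measure_pmf.prob (X d m) E = measure_pmf.prob (X d m) (E \<inter> set_pmf (X d m))"
    by (simp add: measure_Int_set_pmf)
  also have "\<dots> \<le> measure_pmf.prob (X d m) {x. x i \<in> G x}"
    by (rule measure_pmf.finite_measure_mono) (use E in auto)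
  also have "\<dots> \<le> real K / 2 ^ d"
    unfolding X_split[OF i]
  proof (rule prob_bind_le1)
    fix f
    have "measure_pmf.prob (map_pmf (\<lambda>y. f(i := y)) (U d)) {x. x i \<in> G x}
        = measure_pmf.prob (U d) {y. y \<in> G (f(i := y))}" by simp
    also have "{y. y \<in> G (f(i := y))} = G f"
      using G[of "f(i := _)" f] by auto
    also have "measure_pmf.prob (U d) (G f) \<le> real (card (G f)) / 2 ^ d"
      by (rule prob_U[OF fin])
    also have "\<dots> \<le> real K / 2 ^ d"
      using cardG[of f] by (simp add: divide_right_mono)
    finally show "measure_pmf.prob (map_pmf (\<lambda>y. f(i := y)) (U d)) {x. x i \<in> G x} \<le> real K / 2 ^ d" .
  qed
  finally show ?thesis .
qed


definition coll :: "nat \<Rightarrow> (nat \<Rightarrow> bool list) \<Rightarrow> bool" where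
  "coll m x \<longleftrightarrow> (\<exists>a<m. \<exists>b<m. \<exists>c<m. \<exists>e<m. a \<noteq> b \<and> c \<noteq> e \<and> {a,b} \<noteq> {c,e} \<and>
      xorl (x a) (x b) = xorl (x c) (x e))"

lemma coll_quad:
  assumes q: "a < m" "b < m" "c < m" "e < m" "a \<noteq> b" "c \<noteq> e" "{a,b} \<noteq> {c,e}"
  shows "measure_pmf.prob (X d m) {x. xorl (x a) (x b) = xorl (x c) (x e)} \<le> 1 / 2 ^ d"
proof (cases "a \<noteq> c \<and> a \<noteq> e")
  case True
  have "measure_pmf.prob (X d m) {x. xorl (x a) (x b) = xorl (x c) (x e)} \<le> real 1 / 2 ^ d"
  proof (rule PL1[where i = a and G = "\<lambda>x. {xorl (xorl (x c) (x e)) (x b)}"])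
    fix x assume x: "x \<in> set_pmf (X d m)" and ev: "x \<in> {x. xorl (x a) (x b) = xorl (x c) (x e)}"
    have l: "length (x a) = d" "length (x b) = d" using set_X[OF x] q by (auto simp: cube_def)
    have "x a = xorl (xorl (x a) (x b)) (x b)" using l by (simp add: xorl_cancel2)
    then show "x a \<in> {xorl (xorl (x c) (x e)) (x b)}" using ev by simp
  qed (use q True in auto)
  then show ?thesis by simp
next
  case False
  have bu: "b \<noteq> a \<and> b \<noteq> c \<and> b \<noteq> e" using False q by auto
  have "measure_pmf.prob (X d m) {x. xorl (x a) (x b) = xorl (x c) (x e)} \<le> real 1 / 2 ^ d"
  proof (rule PL1[where i = b and G = "\<lambda>x. {xorl (x a) (xorl (x c) (x e))}"])
    fix x assume x: "x \<in> set_pmf (X d m)" and ev: "x \<in> {x. xorl (x a) (x b) = xorl (x c) (x e)}"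
    have l: "length (x a) = d" "length (x b) = d" using set_X[OF x] q by (auto simp: cube_def)
    have "x b = xorl (x a) (xorl (x a) (x b))" using l by (simp add: xorl_cancel)
    then show "x b \<in> {xorl (x a) (xorl (x c) (x e))}" using ev by simp
  qed (use q bu in auto)
  then show ?thesis by simp
qed

lemma PL2: "measure_pmf.prob (X d m) {x. coll m x} \<le> real m ^ 4 / 2 ^ d"
proof -
  define Q where "Q = {(a,b,c,e). a < m \<and> b < m \<and> c < m \<and> e < m \<and> a \<noteq> b \<and> c \<noteq> e \<and> {a,b} \<noteq> {c,e}}"
  define Ev :: "nat \<times> nat \<times> nat \<times> nat \<Rightarrow> (nat \<Rightarrow> bool list) set" where "Ev = (\<lambda>(a,b,c,e). {x. xorl (x a) (x b) = xorl (x c) (x e)})"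
  have QS: "Q \<subseteq> {..<m} \<times> {..<m} \<times> {..<m} \<times> {..<m}" by (auto simp: Q_def)
  have fQ: "finite Q" by (rule finite_subset[OF QS]) auto
  have cQ: "card Q \<le> m ^ 4"
  proof -
    have "card Q \<le> card ({..<m} \<times> {..<m} \<times> {..<m} \<times> {..<m})" by (rule card_mono[OF _ QS]) auto
    also have "\<dots> = m ^ 4" by (simp add: card_cartesian_product power4_eq_xxxx)
    finally show ?thesis .
  qed
  have "{x. coll m x} = (\<Union>q\<in>Q. Ev q)" unfolding coll_def Q_def Ev_def by blast
  then have "measure_pmf.prob (X d m) {x. coll m x} \<le> (\<Sum>q\<in>Q. measure_pmf.prob (X d m) (Ev q))"
    using measure_pmf.finite_measure_subadditive_finite[OF fQ, of Ev] by simp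
  also have "\<dots> \<le> (\<Sum>q\<in>Q. 1 / 2 ^ d)"
  proof (rule sum_mono)
    fix q assume "q \<in> Q"
    moreover obtain a b c e where qq: "q = (a,b,c,e)" by (cases q) blast
    ultimately have "a < m" "b < m" "c < m" "e < m" "a \<noteq> b" "c \<noteq> e" "{a,b} \<noteq> {c,e}"
      unfolding Q_def by simp_all
    then show "measure_pmf.prob (X d m) (Ev q) \<le> 1 / 2 ^ d"
      unfolding Ev_def qq using coll_quad by simp
  qed
  also have "\<dots> = real (card Q) / 2 ^ d" by simp
  also have "\<dots> \<le> real m ^ 4 / 2 ^ d"
    using cQ by (intro divide_right_mono) (auto simp flip: of_nat_power)
  finally show ?thesis .
qed


definition allok :: "(bool list \<Rightarrow> bool) \<Rightarrow> (nat \<Rightarrow> bool list) \<Rightarrow> (nat \<times> nat) list \<Rightarrow> bool" where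
  "allok f x p \<longleftrightarrow> (\<forall>(a,b) \<in> set p. okt f (x a) (x b))"

fun pd :: "nat set \<Rightarrow> (nat \<times> nat) list \<Rightarrow> bool" where
  "pd A [] = True"
| "pd A ((a,b) # p) = (a \<in> A \<and> b \<in> A \<and> a \<noteq> b \<and> pd (A - {a,b}) p)"

lemma allok_Cons: "allok f x ((a,b) # p) = (okt f (x a) (x b) \<and> allok f x p)"
  unfolding allok_def by simp

lemma pd_sub: "pd A p \<Longrightarrow> (a,b) \<in> set p \<Longrightarrow> a \<in> A \<and> b \<in> A"
  by (induction A p rule: pd.induct) auto

definition qk :: "(bool list \<Rightarrow> bool) \<Rightarrow> nat \<Rightarrow> real" where
  "qk f d = measure_pmf.prob (pair_pmf (U d) (U d)) {(y,z). okt f y z}"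

lemma Pi_split2:
  assumes "finite A'" "a \<notin> A'" "b \<notin> A'" "a \<noteq> b"
  shows "Pi_pmf (insert a (insert b A')) dflt P =
    bind_pmf (Pi_pmf A' dflt P) (\<lambda>g. map_pmf (\<lambda>(ya,yb). g(b := yb, a := ya)) (pair_pmf (P a) (P b)))"
proof -
  have "Pi_pmf (insert a (insert b A')) dflt P =
      do {ya \<leftarrow> P a; f \<leftarrow> Pi_pmf (insert b A') dflt P; return_pmf (f(a := ya))}"
    using assms by (subst Pi_pmf_insert') auto
  also have "\<dots> = do {ya \<leftarrow> P a; f \<leftarrow> do {yb \<leftarrow> P b; g \<leftarrow> Pi_pmf A' dflt P; return_pmf (g(b := yb))};
       return_pmf (f(a := ya))}"
    using assms by (subst Pi_pmf_insert'[of A' b]) auto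
  also have "\<dots> = do {ya \<leftarrow> P a; yb \<leftarrow> P b; g \<leftarrow> Pi_pmf A' dflt P; return_pmf (g(b := yb, a := ya))}"
    by (simp add: bind_assoc_pmf bind_return_pmf)
  also have "\<dots> = do {g \<leftarrow> Pi_pmf A' dflt P; ya \<leftarrow> P a; yb \<leftarrow> P b; return_pmf (g(b := yb, a := ya))}"
    by (subst bind_commute_pmf) (subst (2) bind_commute_pmf, rule refl)
  also have "\<dots> = bind_pmf (Pi_pmf A' dflt P) (\<lambda>g. map_pmf (\<lambda>(ya,yb). g(b := yb, a := ya)) (pair_pmf (P a) (P b)))"
    by (simp add: pair_pmf_def map_pmf_def bind_assoc_pmf bind_return_pmf)
  finally show ?thesis .
qed

lemma PL3:
  assumes "finite A" "pd A p"
  shows "measure_pmf.prob (Pi_pmf A [] (\<lambda>_. U d)) {x. allok f x p} \<le> qk f d ^ length p"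
  using assms
proof (induction p arbitrary: A)
  case Nil
  then show ?case by simp
next
  case (Cons ab p)
  obtain a b where ab: "ab = (a,b)" by force
  define A' where "A' = A - {a,b}"
  have pd': "pd A' p" and abA: "a \<in> A" "b \<in> A" "a \<noteq> b" using Cons.prems ab A'_def by auto
  have fA': "finite A'" using Cons.prems by (simp add: A'_def)
  have Aeq: "A = insert a (insert b A')" using abA by (auto simp: A'_def)
  have nin: "\<And>u v. (u,v) \<in> set p \<Longrightarrow> u \<noteq> a \<and> u \<noteq> b \<and> v \<noteq> a \<and> v \<noteq> b"
    using pd_sub[OF pd'] by (auto simp: A'_def)
  have qk0: "0 \<le> qk f d" by (simp add: qk_def)
  have "measure_pmf.prob (Pi_pmf A [] (\<lambda>_. U d)) {x. allok f x (ab # p)}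
      = measure_pmf.prob (bind_pmf (Pi_pmf A' [] (\<lambda>_. U d))
          (\<lambda>g. map_pmf (\<lambda>(ya,yb). g(b := yb, a := ya)) (pair_pmf (U d) (U d)))) {x. allok f x (ab # p)}"
    unfolding Aeq by (subst Pi_split2) (use fA' abA in \<open>auto simp: A'_def\<close>)
  also have "\<dots> \<le> qk f d * measure_pmf.prob (Pi_pmf A' [] (\<lambda>_. U d)) {g. allok f g p}"
  proof (rule prob_bind_le3)
    fix g
    have e: "allok f (g(b := yb, a := ya)) (ab # p) = (okt f ya yb \<and> allok f g p)" for ya yb
    proof -
      have "allok f (g(b := yb, a := ya)) p = allok f g p"
        unfolding allok_def
      proof (intro ball_cong refl)
        fix uv assume uv: "uv \<in> set p"
        obtain u v where uvp: "uv = (u,v)" by force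
        have n: "u \<noteq> a" "u \<noteq> b" "v \<noteq> a" "v \<noteq> b" using nin uv uvp by blast+
        have "(g(b := yb, a := ya)) u = g u" "(g(b := yb, a := ya)) v = g v"
          using n by simp_all
        then show "(case uv of (u, v) \<Rightarrow> okt f ((g(b := yb, a := ya)) u) ((g(b := yb, a := ya)) v)) =
              (case uv of (u, v) \<Rightarrow> okt f (g u) (g v))"
          unfolding uvp by simp
      qed
      moreover have "allok f (g(b := yb, a := ya)) ((a,b) # p) = (okt f ((g(b := yb, a := ya)) a) ((g(b := yb, a := ya)) b) \<and> allok f (g(b := yb, a := ya)) p)"
        unfolding allok_def by simp
      ultimately show ?thesis unfolding ab using abA(3) by simp
    qed
    show "measure_pmf.prob (map_pmf (\<lambda>(ya, yb). g(b := yb, a := ya)) (pair_pmf (U d) (U d))) {x. allok f x (ab # p)} \<le> qk f d"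
      if "g \<in> {g. allok f g p}"
      using that by (simp add: e qk_def case_prod_unfold vimage_def)
    show "measure_pmf.prob (map_pmf (\<lambda>(ya, yb). g(b := yb, a := ya)) (pair_pmf (U d) (U d))) {x. allok f x (ab # p)} = 0"
      if "g \<notin> {g. allok f g p}"
      using that by (simp add: e case_prod_unfold vimage_def)
  qed (rule qk0)
  also have "\<dots> \<le> qk f d * qk f d ^ length p"
    using Cons.IH[OF fA' pd'] qk0 by (simp add: mult_left_mono)
  finally show ?case by simp
qed

lemma pair_U: "pair_pmf (U d) (U d) = pmf_of_set (cube d \<times> cube d)"
proof (rule pmf_eqI)
  fix ab :: "bool list \<times> bool list"
  obtain a b where ab: "ab = (a,b)" by force
  have ne: "cube d \<noteq> {}" "cube d \<times> cube d \<noteq> {}" using cube_nonempty by auto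
  show "pmf (pair_pmf (U d) (U d)) ab = pmf (pmf_of_set (cube d \<times> cube d)) ab"
    unfolding ab U_def pmf_pair
    using ne by (simp add: pmf_of_set[OF ne(1)] pmf_of_set[OF ne(2)] card_cartesian_product indicator_def)
qed

lemma qk_eq: "qk f d = 1 - real (card (Bd f d)) / (real (card (cube d)))^2"
proof -
  have fin: "finite (cube d \<times> cube d)" by simp
  have "qk f d = real (card ((cube d \<times> cube d) \<inter> {(y,z). okt f y z})) / real (card (cube d \<times> cube d))"
    unfolding qk_def pair_U by (simp add: measure_pmf_of_set cube_nonempty)
  moreover have "(cube d \<times> cube d) \<inter> {(y,z). okt f y z} = (cube d \<times> cube d) - Bd f d"
    unfolding Bd_def by auto
  moreover have "card ((cube d \<times> cube d) - Bd f d) = card (cube d \<times> cube d) - card (Bd f d)"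
    by (rule card_Diff_subset) (auto simp: Bd_def intro: finite_subset[OF _ fin])
  moreover have "card (Bd f d) \<le> card (cube d \<times> cube d)"
    by (rule card_mono[OF fin]) (auto simp: Bd_def)
  moreover have "card (cube d \<times> cube d) > 0" by (simp add: card_cartesian_product card_cube)
  ultimately show ?thesis
    by (simp add: card_cartesian_product power2_eq_square of_nat_diff diff_divide_distrib cube_nonempty)
qed


definition used :: "(nat \<times> nat) list \<Rightarrow> nat set" where
  "used p = fst ` set p \<union> snd ` set p"

definition avail :: "nat \<Rightarrow> (nat \<times> nat) list \<Rightarrow> (nat \<times> nat) set" where
  "avail m p = {(a,b). a < m \<and> b < m \<and> a \<noteq> b \<and> a \<notin> used p \<and> b \<notin> used p}"

fun selp :: "nat \<Rightarrow> nat \<Rightarrow> (nat \<times> nat) list pmf" where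
  "selp m 0 = return_pmf []"
| "selp m (Suc k) = bind_pmf (selp m k) (\<lambda>p. map_pmf (\<lambda>c. p @ [c]) (pmf_of_set (avail m p)))"

lemma used_snoc: "used (p @ [(a,b)]) = used p \<union> {a,b}"
  by (auto simp: used_def)

lemma used_Cons: "used ((a,b) # p) = {a,b} \<union> used p"
  by (auto simp: used_def)

lemma finite_used: "finite (used p)" by (simp add: used_def)

lemma card_used: "card (used p) \<le> 2 * length p"
proof (induction p rule: rev_induct)
  case Nil then show ?case by (simp add: used_def)
next
  case (snoc ab p)
  obtain a b where ab: "ab = (a,b)" by force
  have "card (used p \<union> {a,b}) \<le> card (used p) + card {a,b}" by (rule card_Un_le)
  also have "card {a,b} \<le> 2" by (simp add: card_insert_le_m1)
  finally show ?case using snoc ab by (simp add: used_snoc)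
qed

lemma pd_snoc: "pd A (p @ [(a,b)]) = (pd A p \<and> a \<in> A - used p \<and> b \<in> A - used p \<and> a \<noteq> b)"
  by (induction A p rule: pd.induct) (auto simp: used_Cons used_def)

lemma finite_avail: "finite (avail m p)"
  by (rule finite_subset[of _ "{..<m} \<times> {..<m}"]) (auto simp: avail_def)

lemma avail_card:
  assumes "2 * length p + 2 \<le> m"
  shows "card (avail m p) \<ge> (m - 2 * length p) * (m - 2 * length p - 1)"
proof -
  define R where "R = {..<m} - used p"
  have fR: "finite R" by (simp add: R_def)
  have cR: "card R \<ge> m - 2 * length p"
  proof -
    have "card R \<ge> card {..<m} - card (used p)" unfolding R_def by (rule diff_card_le_card_Diff) (simp add: finite_used)
    then show ?thesis using card_used[of p] by simp
  qed
  have e: "avail m p = (R \<times> R) - {(a,a) | a. a \<in> R}" by (auto simp: avail_def R_def)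
  have d: "{(a,a) | a. a \<in> R} = (\<lambda>a. (a,a)) ` R" by auto
  have cd: "card {(a,a) | a. a \<in> R} = card R" unfolding d by (rule card_image) (auto simp: inj_on_def)
  have "card (avail m p) = card R * card R - card R"
    unfolding e by (subst card_Diff_subset) (auto simp: fR card_cartesian_product cd)
  also have "card R * card R - card R = card R * (card R - 1)" by (simp add: diff_mult_distrib2)
  finally have "card (avail m p) = card R * (card R - 1)" .
  moreover have "(m - 2 * length p) * (m - 2 * length p - 1) \<le> card R * (card R - 1)"
    using cR by (intro mult_mono) auto
  ultimately show ?thesis by simp
qed

lemma avail_ne: "2 * length p + 2 \<le> m \<Longrightarrow> avail m p \<noteq> {}"
proof -
  assume a: "2 * length p + 2 \<le> m"
  have "2 * 1 \<le> (m - 2 * length p) * (m - 2 * length p - 1)"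
    using a by (intro mult_mono) auto
  also have "\<dots> \<le> card (avail m p)" using avail_card[OF a] .
  finally show ?thesis by auto
qed

lemma selp_support:
  "2 * k \<le> m \<Longrightarrow> p \<in> set_pmf (selp m k) \<Longrightarrow> length p = k \<and> pd {..<m} p"
proof (induction k arbitrary: p)
  case 0 then show ?case by simp
next
  case (Suc k)
  then obtain q c where q: "q \<in> set_pmf (selp m k)" and c: "c \<in> set_pmf (pmf_of_set (avail m q))" and p: "p = q @ [c]"
    by auto
  have IH: "length q = k \<and> pd {..<m} q" using Suc q by simp
  have ne: "avail m q \<noteq> {}" using IH Suc.prems by (intro avail_ne) simp
  have "c \<in> avail m q" using c ne finite_avail by simp
  then show ?case using IH p by (cases c) (auto simp: pd_snoc avail_def)
qed

lemma selp_bound: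
  assumes "2 * n \<le> m"
    and hyp: "\<And>k p. k < n \<Longrightarrow> p \<in> set_pmf (selp m k) \<Longrightarrow>
         measure_pmf.prob (pmf_of_set (avail m p)) (F k p) \<le> \<beta> k"
  shows "measure_pmf.prob (selp m n) {p. \<exists>k<n. p ! k \<in> F k (take k p)} \<le> (\<Sum>k<n. \<beta> k)"
  using assms
proof (induction n)
  case 0 then show ?case by simp
next
  case (Suc n)
  obtain p0 where p0: "p0 \<in> set_pmf (selp m n)" using set_pmf_not_empty[of "selp m n"] by blast
  have b0: "0 \<le> \<beta> n" using Suc.prems(2)[OF _ p0] measure_nonneg order_trans by blast
  have "measure_pmf.prob (selp m (Suc n)) {p. \<exists>k<Suc n. p ! k \<in> F k (take k p)}
     \<le> measure_pmf.prob (selp m n) {p. \<exists>k<n. p ! k \<in> F k (take k p)} + \<beta> n"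
    unfolding selp.simps
  proof (rule prob_bind_le2[OF _ b0])
    fix p assume p: "p \<in> set_pmf (selp m n)" and nB: "p \<notin> {p. \<exists>k<n. p ! k \<in> F k (take k p)}"
    have lp: "length p = n" using selp_support[OF _ p] Suc.prems by simp
    have "(\<lambda>c. p @ [c]) -` {p. \<exists>k<Suc n. p ! k \<in> F k (take k p)} = F n p"
    proof -
      have "(\<exists>k<Suc n. (p @ [c]) ! k \<in> F k (take k (p @ [c]))) \<longleftrightarrow> c \<in> F n p" for c
      proof -
        have "k < n \<Longrightarrow> (p @ [c]) ! k = p ! k \<and> take k (p @ [c]) = take k p" for k
          using lp by (simp add: nth_append)
        then show ?thesis using nB lp by (auto simp: less_Suc_eq)
      qed
      then show ?thesis by auto
    qed
    then show "measure_pmf.prob (map_pmf (\<lambda>c. p @ [c]) (pmf_of_set (avail m p)))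
        {p. \<exists>k<Suc n. p ! k \<in> F k (take k p)} \<le> \<beta> n"
      using Suc.prems(2)[OF _ p] by simp
  qed
  also have "\<dots> \<le> (\<Sum>k<n. \<beta> k) + \<beta> n"
    using Suc by simp
  finally show ?case by simp
qed

fun erun :: "(bool list \<Rightarrow> bool) \<Rightarrow> adversary \<Rightarrow> bool list set \<Rightarrow>
    (bool list \<times> bool option) list \<Rightarrow> bool list list \<Rightarrow> bool list set" where
  "erun f adv E h [] = E"
| "erun f adv E h (q # qs) =
     (let a = (if q \<in> E then None else Some (f q));
          h' = h @ [(q, a)]
      in erun f adv (E \<union> adv h') h' qs)"

lemma oracle_len: "length (oracle_run f adv E h qs) = length qs"
  by (induction qs arbitrary: E h) (auto simp: Let_def)

lemma oracle_nth:
  "j < length qs \<Longrightarrow> oracle_run f adv E h qs ! j =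
     (if qs ! j \<in> erun f adv E h (take j qs) then None else Some (f (qs ! j)))"
proof (induction qs arbitrary: E h j)
  case Nil then show ?case by simp
next
  case (Cons q qs)
  show ?case
  proof (cases j)
    case 0 then show ?thesis by (simp add: Let_def)
  next
    case (Suc j')
    then show ?thesis using Cons by (simp add: Let_def)
  qed
qed

lemma erun_card:
  assumes "valid_adversary t adv" "finite E"
  shows "finite (erun f adv E h qs) \<and> card (erun f adv E h qs) \<le> card E + t * length qs"
  using assms(2)
proof (induction qs arbitrary: E h)
  case Nil then show ?case by simp
next
  case (Cons q qs)
  define h' where "h' = h @ [(q, if q \<in> E then None else Some (f q))]"
  have v: "finite (adv h')" "card (adv h') \<le> t" using assms(1) unfolding valid_adversary_def by auto
  have fE: "finite (E \<union> adv h')" using Cons.prems v by simp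
  have cE: "card (E \<union> adv h') \<le> card E + t" using card_Un_le[of E "adv h'"] v by simp
  have "erun f adv E h (q # qs) = erun f adv (E \<union> adv h') h' qs" by (simp add: h'_def Let_def)
  then show ?case using Cons.IH[OF fE, of h'] cE by simp
qed


definition sumf :: "(nat \<Rightarrow> bool list) \<Rightarrow> nat \<times> nat \<Rightarrow> bool list" where
  "sumf x = (\<lambda>(a,b). xorl (x a) (x b))"

definition qsf :: "nat \<Rightarrow> (nat \<Rightarrow> bool list) \<Rightarrow> (nat \<times> nat) list \<Rightarrow> bool list list" where
  "qsf m x p = map x [0..<m] @ map (sumf x) p"

definition decf :: "nat \<Rightarrow> (nat \<times> nat) list \<Rightarrow> bool option list \<Rightarrow> bool" where
  "decf m p ans = (\<forall>k<length p. case p ! k of (a,b) \<Rightarrow>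
      (case (ans ! a, ans ! b, ans ! (m + k)) of (Some u, Some v, Some w) \<Rightarrow> (u \<noteq> v) = w | _ \<Rightarrow> True))"

definition Er :: "(bool list \<Rightarrow> bool) \<Rightarrow> adversary \<Rightarrow> bool list list \<Rightarrow> bool list set" where
  "Er f adv qs = erun f adv {} [] qs"

definition F3 :: "(bool list \<Rightarrow> bool) \<Rightarrow> adversary \<Rightarrow> nat \<Rightarrow> (nat \<Rightarrow> bool list) \<Rightarrow> nat \<Rightarrow> (nat \<times> nat) list \<Rightarrow> (nat \<times> nat) set" where
  "F3 f adv m x k q = {c. sumf x c \<in> Er f adv (map x [0..<m] @ map (sumf x) q)}"

lemma length_qsf: "length (qsf m x p) = m + length p"
  by (simp add: qsf_def)

lemma qsf_x: "j < m \<Longrightarrow> qsf m x p ! j = x j \<and> take j (qsf m x p) = map x [0..<j]"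
  by (simp add: qsf_def nth_append take_map)

lemma qsf_s: "k < length p \<Longrightarrow> qsf m x p ! (m + k) = sumf x (p ! k) \<and>
    take (m + k) (qsf m x p) = map x [0..<m] @ map (sumf x) (take k p)"
  by (simp add: qsf_def nth_append take_map)

lemma answers_nth: "j < length qs \<Longrightarrow> answers f adv qs ! j =
     (if qs ! j \<in> Er f adv (take j qs) then None else Some (f (qs ! j)))"
  unfolding answers_def Er_def by (rule oracle_nth)

lemma accept_cases:
  assumes pd: "pd {..<m} p" and acc: "decf m p (answers f adv (qsf m x p))"
  shows "allok f x p \<or> (\<exists>j<m. x j \<in> Er f adv (map x [0..<j])) \<or>
         (\<exists>k<length p. p ! k \<in> F3 f adv m x k (take k p))"
proof (rule ccontr)
  assume "\<not> ?thesis"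
  then have n1: "\<not> allok f x p" and n2: "\<And>j. j < m \<Longrightarrow> x j \<notin> Er f adv (map x [0..<j])"
    and n3: "\<And>k. k < length p \<Longrightarrow> p ! k \<notin> F3 f adv m x k (take k p)" by auto
  from n1 obtain a b where ab: "(a,b) \<in> set p" "\<not> okt f (x a) (x b)" unfolding allok_def by auto
  then obtain k where k: "k < length p" "p ! k = (a,b)" by (metis in_set_conv_nth)
  have am: "a < m" "b < m" using pd_sub[OF pd ab(1)] by auto
  let ?qs = "qsf m x p"
  have ans_a: "answers f adv ?qs ! a = Some (f (x a))"
    using am qsf_x[of a m x p] n2[of a] answers_nth[of a ?qs f adv] by (auto simp: length_qsf)
  have ans_b: "answers f adv ?qs ! b = Some (f (x b))"
    using am qsf_x[of b m x p] n2[of b] answers_nth[of b ?qs f adv] by (auto simp: length_qsf)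
  have ans_s: "answers f adv ?qs ! (m + k) = Some (f (xorl (x a) (x b)))"
    using k qsf_s[of k p m x] n3[of k] answers_nth[of "m+k" ?qs f adv]
    by (auto simp: length_qsf F3_def sumf_def)
  have "okt f (x a) (x b)"
    using acc k ans_a ans_b ans_s unfolding decf_def okt_def by force
  then show False using ab by simp
qed

lemma linear_accept:
  assumes lin: "is_linear_fn d f" and xs: "\<And>j. j < m \<Longrightarrow> x j \<in> cube d" and pd: "pd {..<m} p"
  shows "decf m p (answers f adv (qsf m x p))"
  unfolding decf_def
proof (intro allI impI)
  fix k assume k: "k < length p"
  obtain a b where ab: "p ! k = (a,b)" by force
  have "(a,b) \<in> set p" using k ab by (metis nth_mem)
  then have am: "a < m" "b < m" using pd_sub[OF pd] by auto
  let ?qs = "qsf m x p"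
  have A: "answers f adv ?qs ! a = None \<or> answers f adv ?qs ! a = Some (f (x a))"
    using am qsf_x[of a m x p] answers_nth[of a ?qs f adv] by (auto simp: length_qsf)
  have B: "answers f adv ?qs ! b = None \<or> answers f adv ?qs ! b = Some (f (x b))"
    using am qsf_x[of b m x p] answers_nth[of b ?qs f adv] by (auto simp: length_qsf)
  have S: "answers f adv ?qs ! (m + k) = None \<or> answers f adv ?qs ! (m + k) = Some (f (xorl (x a) (x b)))"
    using k qsf_s[of k p m x] ab answers_nth[of "m+k" ?qs f adv] by (auto simp: length_qsf sumf_def)
  have L: "f (xorl (x a) (x b)) = (f (x a) \<noteq> f (x b))"
    using linear_additive[OF lin xs xs] am by blast
  show "case p ! k of (a, b) \<Rightarrow> (case (answers f adv ?qs ! a, answers f adv ?qs ! b, answers f adv ?qs ! (m + k)) of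
        (Some u, Some v, Some w) \<Rightarrow> (u \<noteq> v) = w | _ \<Rightarrow> True)"
    unfolding ab using A B S L by (elim disjE) auto
qed

lemma prob_mono_supp:
  assumes "\<And>x. x \<in> set_pmf M \<Longrightarrow> x \<in> A \<Longrightarrow> x \<in> B"
  shows "measure_pmf.prob M A \<le> measure_pmf.prob M B"
proof -
  have "measure_pmf.prob M A = measure_pmf.prob M (A \<inter> set_pmf M)" by (simp add: measure_Int_set_pmf)
  also have "\<dots> \<le> measure_pmf.prob M B" by (rule measure_pmf.finite_measure_mono) (use assms in auto)
  finally show ?thesis .
qed


lemma pair_as_bind1: "pair_pmf A B = bind_pmf A (\<lambda>x. map_pmf (\<lambda>y. (x,y)) B)"
  by (simp add: pair_pmf_def map_pmf_def)

lemma pair_as_bind2: "pair_pmf A B = bind_pmf B (\<lambda>y. map_pmf (\<lambda>x. (x,y)) A)"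
  by (simp add: pair_pmf_def map_pmf_def) (rule bind_commute_pmf)

lemma LA1:
  assumes "2 * s \<le> m"
  shows "measure_pmf.prob (pair_pmf (X d m) (selp m s)) {(x,p). allok f x p} \<le> qk f d ^ s"
  unfolding pair_as_bind2
proof (rule prob_bind_le1)
  fix p assume p: "p \<in> set_pmf (selp m s)"
  have sp: "length p = s" "pd {..<m} p" using selp_support[OF assms p] by auto
  have "measure_pmf.prob (map_pmf (\<lambda>x. (x, p)) (X d m)) {(x,p). allok f x p}
      = measure_pmf.prob (X d m) {x. allok f x p}" by (simp add: vimage_def)
  also have "\<dots> \<le> qk f d ^ length p"
    unfolding X_def by (rule PL3) (use sp in auto)
  finally show "measure_pmf.prob (map_pmf (\<lambda>x. (x, p)) (X d m)) {(x,p). allok f x p} \<le> qk f d ^ s"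
    using sp by simp
qed

lemma Er_card:
  assumes "valid_adversary t adv"
  shows "finite (Er f adv qs) \<and> card (Er f adv qs) \<le> t * length qs"
  using erun_card[OF assms, of "{}" f "[]" qs] unfolding Er_def by simp

lemma LA2:
  assumes v: "valid_adversary t adv"
  shows "measure_pmf.prob (pair_pmf (X d m) (selp m s)) {(x,p). \<exists>j<m. x j \<in> Er f adv (map x [0..<j])}
     \<le> real m * (real t * real m / 2 ^ d)"
proof -
  let ?B = "{x. \<exists>j<m. x j \<in> Er f adv (map x [0..<j])}"
  have "measure_pmf.prob (pair_pmf (X d m) (selp m s)) {(x,p). \<exists>j<m. x j \<in> Er f adv (map x [0..<j])}
      \<le> measure_pmf.prob (X d m) ?B + 0"
    unfolding pair_as_bind1 by (rule prob_bind_le2) (auto simp: vimage_def)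
  also have "\<dots> \<le> (\<Sum>j<m. measure_pmf.prob (X d m) {x. x j \<in> Er f adv (map x [0..<j])})"
  proof -
    have "?B = (\<Union>j\<in>{..<m}. {x. x j \<in> Er f adv (map x [0..<j])})" by auto
    then show ?thesis
      using measure_pmf.finite_measure_subadditive_finite[of "{..<m}" "\<lambda>j. {x. x j \<in> Er f adv (map x [0..<j])}" "X d m"]
      by simp
  qed
  also have "\<dots> \<le> (\<Sum>j<m. real t * real m / 2 ^ d)"
  proof (rule sum_mono)
    fix j assume j: "j \<in> {..<m}"
    have "measure_pmf.prob (X d m) {x. x j \<in> Er f adv (map x [0..<j])} \<le> real (t * j) / 2 ^ d"
    proof (rule PL1[where i = j and G = "\<lambda>x. Er f adv (map x [0..<j])"])
      show "j < m" using j by simp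
      show "\<And>x y. (\<And>i. i \<noteq> j \<Longrightarrow> x i = y i) \<Longrightarrow> Er f adv (map x [0..<j]) = Er f adv (map y [0..<j])"
        by (metis (mono_tags, lifting) atLeastLessThan_iff less_irrefl_nat map_eq_conv set_upt)
      show "\<And>x. finite (Er f adv (map x [0..<j]))" using Er_card[OF v] by blast
      show "\<And>x. card (Er f adv (map x [0..<j])) \<le> t * j" using Er_card[OF v] by (metis length_map length_upt minus_nat.diff_0)
    qed auto
    also have "\<dots> \<le> real t * real m / 2 ^ d"
      using j by (intro divide_right_mono) (auto intro: mult_left_mono)
    finally show "measure_pmf.prob (X d m) {x. x j \<in> Er f adv (map x [0..<j])} \<le> real t * real m / 2 ^ d" .
  qed
  also have "\<dots> = real m * (real t * real m / 2 ^ d)" by simp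
  finally show ?thesis .
qed

lemma card_bad:
  assumes v: "valid_adversary t adv" and nc: "\<not> (t \<noteq> 0 \<and> coll m x)"
  shows "card (avail m q \<inter> F3 f adv m x k q) \<le> 2 * (t * (m + length q))"
proof -
  let ?G = "Er f adv (map x [0..<m] @ map (sumf x) q)"
  have fG: "finite ?G" and cG: "card ?G \<le> t * (m + length q)"
    using Er_card[OF v, of f "map x [0..<m] @ map (sumf x) q"] by auto
  show ?thesis
  proof (cases "t = 0")
    case True
    then have "?G = {}" using fG cG by simp
    then have "avail m q \<inter> F3 f adv m x k q = {}" by (auto simp: F3_def)
    then show ?thesis by simp
  next
    case False
    then have ncoll: "\<not> coll m x" using nc by simp
    let ?psi = "\<lambda>c. (sumf x c, fst c < snd c)"
    have "card (avail m q \<inter> F3 f adv m x k q) \<le> card (?G \<times> (UNIV :: bool set))"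
    proof (rule card_inj_on_le[where f = ?psi])
      show "inj_on ?psi (avail m q \<inter> F3 f adv m x k q)"
      proof (rule inj_onI)
        fix c c' assume c: "c \<in> avail m q \<inter> F3 f adv m x k q" and c': "c' \<in> avail m q \<inter> F3 f adv m x k q"
          and eq: "?psi c = ?psi c'"
        obtain a b where ab: "c = (a,b)" by force
        obtain a' b' where ab': "c' = (a',b')" by force
        have r: "a < m" "b < m" "a \<noteq> b" "a' < m" "b' < m" "a' \<noteq> b'" using c c' ab ab' by (auto simp: avail_def)
        have s: "xorl (x a) (x b) = xorl (x a') (x b')" and o: "(a < b) = (a' < b')" using eq ab ab' by (auto simp: sumf_def)
        have "{a,b} = {a',b'}" using ncoll r s unfolding coll_def by blast
        then show "c = c'" using ab ab' o r by (auto simp: doubleton_eq_iff)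
      qed
      show "?psi ` (avail m q \<inter> F3 f adv m x k q) \<subseteq> ?G \<times> UNIV" by (auto simp: F3_def)
      show "finite (?G \<times> (UNIV :: bool set))" using fG by simp
    qed
    also have "\<dots> = 2 * card ?G" by (simp add: card_cartesian_product)
    finally show ?thesis using cG by simp
  qed
qed

lemma step_bound:
  assumes v: "valid_adversary t adv" and nc: "\<not> (t \<noteq> 0 \<and> coll m x)"
    and ms: "4 * s + 2 \<le> m" and k: "k < s" and lq: "length q = k"
  shows "measure_pmf.prob (pmf_of_set (avail m q)) (F3 f adv m x k q) \<le> 16 * real t / real m"
proof -
  have ne: "avail m q \<noteq> {}" using ms k lq by (intro avail_ne) simp
  define cA where "cA = card (avail m q)"
  define cI where "cI = card (avail m q \<inter> F3 f adv m x k q)"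
  have P: "measure_pmf.prob (pmf_of_set (avail m q)) (F3 f adv m x k q) = real cI / real cA"
    unfolding cI_def cA_def by (simp add: measure_pmf_of_set ne finite_avail)
  define r where "r = m - 2 * k"
  have r1: "m + 2 \<le> 2 * r" using ms k by (simp add: r_def)
  have cA1: "cA \<ge> r * (r - 1)" unfolding cA_def r_def using avail_card[of q m] ms k lq by simp
  have "m * m \<le> (2 * r) * (2 * (r - 1))" using r1 by (intro mult_mono) auto
  also have "\<dots> = 4 * (r * (r - 1))" by simp
  finally have cA2: "m * m \<le> 4 * cA" using cA1 by linarith
  have cI1: "cI \<le> 2 * (t * (m + k))" unfolding cI_def using card_bad[OF v nc, where q=q and k=k and f=f] lq by simp
  have km: "m + k \<le> 2 * m" using k ms by simp
  have "2 * (t * (m + k)) \<le> 2 * (t * (2 * m))" using km by (intro mult_left_mono) auto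
  also have "\<dots> = 4 * t * m" by simp
  finally have cI2: "cI \<le> 4 * t * m" using cI1 by linarith
  have mpos: "0 < m" using ms by simp
  have cApos: "0 < cA" using ne finite_avail unfolding cA_def by (simp add: card_gt_0_iff)
  have "cI * m \<le> (4 * t * m) * m" using cI2 by (rule mult_right_mono) simp
  also have "\<dots> = 4 * t * (m * m)" by (simp add: mult.assoc)
  also have "\<dots> \<le> 4 * t * (4 * cA)" using cA2 by (rule mult_left_mono) simp
  also have "\<dots> = 16 * t * cA" by simp
  finally have keyn: "cI * m \<le> 16 * t * cA" .
  then have key: "real cI * real m \<le> 16 * real t * real cA"
    by (metis of_nat_le_iff of_nat_mult of_nat_numeral)
  have "real cI / real cA * real m = real cI * real m / real cA" by simp
  also have "\<dots> \<le> 16 * real t" using key cApos by (simp add: divide_le_eq)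
  finally have "real cI / real cA * real m \<le> 16 * real t" .
  then have "real cI / real cA \<le> 16 * real t / real m" using mpos by (simp add: le_divide_eq)
  then show ?thesis using P by simp
qed

lemma LA3:
  assumes v: "valid_adversary t adv" and ms: "4 * s + 2 \<le> m"
  shows "measure_pmf.prob (pair_pmf (X d m) (selp m s)) {(x,p). \<exists>k<length p. p ! k \<in> F3 f adv m x k (take k p)}
     \<le> measure_pmf.prob (X d m) {x. t \<noteq> 0 \<and> coll m x} + real s * (16 * real t / real m)"
  unfolding pair_as_bind1
proof (rule prob_bind_le2)
  show "0 \<le> real s * (16 * real t / real m)" by simp
  fix x assume x: "x \<in> set_pmf (X d m)" and nB: "x \<notin> {x. t \<noteq> 0 \<and> coll m x}"
  have "measure_pmf.prob (map_pmf (Pair x) (selp m s)) {(x,p). \<exists>k<length p. p ! k \<in> F3 f adv m x k (take k p)}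
     = measure_pmf.prob (selp m s) {p. \<exists>k<length p. p ! k \<in> F3 f adv m x k (take k p)}"
    by (simp add: vimage_def)
  also have "\<dots> \<le> measure_pmf.prob (selp m s) {p. \<exists>k<s. p ! k \<in> F3 f adv m x k (take k p)}"
  proof (rule prob_mono_supp)
    fix p assume p: "p \<in> set_pmf (selp m s)" and ev: "p \<in> {p. \<exists>k<length p. p ! k \<in> F3 f adv m x k (take k p)}"
    have "length p = s" using selp_support[OF _ p] ms by simp
    then show "p \<in> {p. \<exists>k<s. p ! k \<in> F3 f adv m x k (take k p)}" using ev by simp
  qed
  also have "\<dots> \<le> (\<Sum>k<s. 16 * real t / real m)"
  proof (rule selp_bound)
    show "2 * s \<le> m" using ms by simp
    fix k q assume k: "k < s" and q: "q \<in> set_pmf (selp m k)"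
    have "length q = k" using selp_support[OF _ q] ms k by simp
    then show "measure_pmf.prob (pmf_of_set (avail m q)) (F3 f adv m x k q) \<le> 16 * real t / real m"
      using step_bound[OF v _ ms k] nB by simp
  qed
  also have "\<dots> = real s * (16 * real t / real m)" by simp
  finally show "measure_pmf.prob (map_pmf (Pair x) (selp m s)) {(x,p). \<exists>k<length p. p ! k \<in> F3 f adv m x k (take k p)}
     \<le> real s * (16 * real t / real m)" .
qed


definition sN :: "real \<Rightarrow> nat" where "sN \<epsilon> = nat \<lceil>60 / \<epsilon>\<rceil>"
definition mN :: "nat \<Rightarrow> real \<Rightarrow> nat" where "mN t \<epsilon> = 576 * max 1 t * sN \<epsilon>"
definition Tst :: "nat \<Rightarrow> nat \<Rightarrow> real \<Rightarrow> nonadaptive_alg" where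
  "Tst d t \<epsilon> = map_pmf (\<lambda>(x,p). (qsf (mN t \<epsilon>) x p, decf (mN t \<epsilon>) p))
      (pair_pmf (X d (mN t \<epsilon>)) (selp (mN t \<epsilon>) (sN \<epsilon>)))"

lemma sN_bounds:
  assumes "0 < \<epsilon>" "\<epsilon> \<le> 1"
  shows "1 \<le> sN \<epsilon>" "60 / \<epsilon> \<le> real (sN \<epsilon>)" "real (sN \<epsilon>) \<le> 61 / \<epsilon>"
proof -
  have y: "60 \<le> 60 / \<epsilon>" using assms by (simp add: field_simps)
  have c1: "60 / \<epsilon> \<le> real_of_int \<lceil>60 / \<epsilon>\<rceil>" by (rule le_of_int_ceiling)
  have c2: "real_of_int \<lceil>60 / \<epsilon>\<rceil> \<le> 60 / \<epsilon> + 1" by (rule of_int_ceiling_le_add_one)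
  have c0: "0 \<le> \<lceil>60 / \<epsilon>\<rceil>" using c1 y by linarith
  have r: "real (sN \<epsilon>) = real_of_int \<lceil>60 / \<epsilon>\<rceil>" unfolding sN_def using c0 by simp
  show "60 / \<epsilon> \<le> real (sN \<epsilon>)" using r c1 by simp
  then show "1 \<le> sN \<epsilon>" using y by simp
  have "1 \<le> 1 / \<epsilon>" using assms by (simp add: le_divide_eq)
  moreover have "61 / \<epsilon> = 60 / \<epsilon> + 1 / \<epsilon>" by (simp add: add_divide_distrib[symmetric])
  ultimately show "real (sN \<epsilon>) \<le> 61 / \<epsilon>" using r c2 by linarith
qed

lemma pow_bound:
  fixes \<eta> :: real
  assumes "0 \<le> \<eta>" "\<eta> \<le> 1" "5 \<le> real s * \<eta>"
  shows "(1 - \<eta>) ^ s \<le> 1 / 6"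
proof -
  have b: "1 + real s * \<eta> \<le> (1 + \<eta>) ^ s" using Bernoulli_inequality[of \<eta> s] assms by simp
  have "(1 - \<eta>) ^ s * (1 + \<eta>) ^ s = (1 - \<eta>^2) ^ s" by (simp add: power_mult_distrib[symmetric] power2_eq_square algebra_simps)
  also have "\<dots> \<le> 1" using assms by (intro power_le_one) (auto simp: power2_eq_square mult_le_one)
  finally have p: "(1 - \<eta>) ^ s * (1 + \<eta>) ^ s \<le> 1" .
  have pos: "0 < (1 + \<eta>) ^ s" using assms by simp
  have "(1 - \<eta>) ^ s \<le> 1 / (1 + \<eta>) ^ s" using p pos by (simp add: le_divide_eq)
  also have "\<dots> \<le> 1 / (1 + real s * \<eta>)" using b assms by (intro divide_left_mono) auto
  also have "\<dots> \<le> 1 / 6" using assms by (intro divide_left_mono) auto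
  finally show ?thesis .
qed

lemma qk_pow:
  assumes far: "eps_far_linear \<epsilon> d f" and e: "0 < \<epsilon>" "\<epsilon> \<le> 1" and s: "60 / \<epsilon> \<le> real s"
  shows "qk f d ^ s \<le> 1 / 6"
proof -
  define N where "N = real (card (cube d))"
  define \<eta> where "\<eta> = real (card (Bd f d)) / N ^ 2"
  have Npos: "0 < N" unfolding N_def by (simp add: card_cube)
  have q: "qk f d = 1 - \<eta>" unfolding \<eta>_def N_def by (rule qk_eq)
  have "\<epsilon> / 12 * N^2 \<le> real (card (Bd f d))" unfolding N_def by (rule BLR[OF far e])
  then have h1: "\<epsilon> / 12 \<le> \<eta>" unfolding \<eta>_def using Npos by (simp add: le_divide_eq)
  have "card (Bd f d) \<le> card (cube d \<times> cube d)" by (rule card_mono) (auto simp: Bd_def)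
  then have "real (card (Bd f d)) \<le> N^2" unfolding N_def
    by (metis card_cartesian_product of_nat_le_iff of_nat_mult power2_eq_square)
  then have h2: "\<eta> \<le> 1" unfolding \<eta>_def using Npos by (simp add: divide_le_eq)
  have "5 = 60 / \<epsilon> * (\<epsilon> / 12)" using e by simp
  also have "\<dots> \<le> real s * \<eta>" using s h1 e by (intro mult_mono) auto
  finally have "5 \<le> real s * \<eta>" .
  then show ?thesis unfolding q using pow_bound h1 h2 e by simp
qed

lemma set_Tst:
  assumes "(qs, dec) \<in> set_pmf (Tst d t \<epsilon>)"
  shows "\<exists>x p. x \<in> set_pmf (X d (mN t \<epsilon>)) \<and> p \<in> set_pmf (selp (mN t \<epsilon>) (sN \<epsilon>)) \<and>
     qs = qsf (mN t \<epsilon>) x p \<and> dec = decf (mN t \<epsilon>) p"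
  using assms unfolding Tst_def by auto

lemma accept_eq:
  "accept_prob (Tst d t \<epsilon>) f adv = measure_pmf.prob (pair_pmf (X d (mN t \<epsilon>)) (selp (mN t \<epsilon>) (sN \<epsilon>)))
     {(x,p). decf (mN t \<epsilon>) p (answers f adv (qsf (mN t \<epsilon>) x p))}"
  unfolding accept_prob_def Tst_def by (simp add: vimage_def case_prod_unfold)


lemma pmf_union_le: "measure_pmf.prob M (A \<union> B) \<le> measure_pmf.prob M A + measure_pmf.prob M B"
  by (rule measure_subadditive) (auto simp: measure_pmf.emeasure_eq_measure)

lemma main_support:
  assumes e: "0 < \<epsilon>" "\<epsilon> \<le> 1" and qd: "(qs, dec) \<in> set_pmf (Tst d t \<epsilon>)"
  shows "set qs \<subseteq> cube d \<and> real (length qs) \<le> 35197 * real (max 1 t) / \<epsilon>"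
proof -
  obtain x p where x: "x \<in> set_pmf (X d (mN t \<epsilon>))" and p: "p \<in> set_pmf (selp (mN t \<epsilon>) (sN \<epsilon>))"
    and qs: "qs = qsf (mN t \<epsilon>) x p" using set_Tst[OF qd] by blast
  have s1: "1 \<le> sN \<epsilon>" and s3: "real (sN \<epsilon>) \<le> 61 / \<epsilon>" using sN_bounds[OF e] by auto
  have ms: "2 * sN \<epsilon> \<le> mN t \<epsilon>" unfolding mN_def using s1 by simp
  have sp: "length p = sN \<epsilon>" "pd {..<mN t \<epsilon>} p" using selp_support[OF ms p] by auto
  have "set qs \<subseteq> cube d"
  proof
    fix q assume "q \<in> set qs"
    then consider (a) j where "j < mN t \<epsilon>" "q = x j" | (b) c where "c \<in> set p" "q = sumf x c"
      unfolding qs qsf_def by auto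
    then show "q \<in> cube d"
    proof cases
      case a then show ?thesis using set_X[OF x] by simp
    next
      case b
      obtain u v where c: "c = (u,v)" by force
      have "u < mN t \<epsilon>" "v < mN t \<epsilon>" using pd_sub[OF sp(2)] b c by auto
      then show ?thesis using b c set_X[OF x] by (auto simp: sumf_def)
    qed
  qed
  moreover have "real (length qs) \<le> 35197 * real (max 1 t) / \<epsilon>"
  proof -
    have "length qs = mN t \<epsilon> + sN \<epsilon>" unfolding qs length_qsf sp(1) ..
    also have "\<dots> \<le> 577 * max 1 t * sN \<epsilon>" unfolding mN_def
    proof -
      have "sN \<epsilon> \<le> max 1 t * sN \<epsilon>" by simp
      then show "576 * max 1 t * sN \<epsilon> + sN \<epsilon> \<le> 577 * max 1 t * sN \<epsilon>" by simp
    qed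
    finally have "real (length qs) \<le> 577 * real (max 1 t) * real (sN \<epsilon>)"
      by (metis of_nat_le_iff of_nat_mult of_nat_numeral)
    also have "\<dots> \<le> 577 * real (max 1 t) * (61 / \<epsilon>)"
      using s3 by (intro mult_left_mono) auto
    also have "\<dots> = 35197 * real (max 1 t) / \<epsilon>" by simp
    finally show ?thesis .
  qed
  ultimately show ?thesis by blast
qed

lemma main_linear:
  assumes lin: "is_linear_fn d f" and e: "0 < \<epsilon>" "\<epsilon> \<le> 1"
  shows "accept_prob (Tst d t \<epsilon>) f adv = 1"
proof -
  let ?m = "mN t \<epsilon>" and ?s = "sN \<epsilon>"
  have s1: "1 \<le> ?s" using sN_bounds[OF e] by auto
  have ms: "2 * ?s \<le> ?m" unfolding mN_def using s1 by simp
  let ?PP = "pair_pmf (X d ?m) (selp ?m ?s)"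
  have "measure_pmf.prob ?PP UNIV \<le> measure_pmf.prob ?PP {(x,p). decf ?m p (answers f adv (qsf ?m x p))}"
  proof (rule prob_mono_supp)
    fix xp assume xp: "xp \<in> set_pmf ?PP"
    obtain x p where e: "xp = (x,p)" by force
    have x: "x \<in> set_pmf (X d ?m)" and p: "p \<in> set_pmf (selp ?m ?s)" using xp e by auto
    have "decf ?m p (answers f adv (qsf ?m x p))"
      by (rule linear_accept[OF lin]) (use set_X[OF x] selp_support[OF ms p] in auto)
    then show "xp \<in> {(x,p). decf ?m p (answers f adv (qsf ?m x p))}" using e by simp
  qed
  moreover have "measure_pmf.prob ?PP UNIV = 1" by simp
  moreover have "measure_pmf.prob ?PP {(x,p). decf ?m p (answers f adv (qsf ?m x p))} \<le> 1"
    by (rule measure_pmf.prob_le_1)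
  ultimately show ?thesis unfolding accept_eq by linarith
qed

lemma main_far:
  assumes v: "valid_adversary t adv" and far: "eps_far_linear \<epsilon> d f" and e: "0 < \<epsilon>" "\<epsilon> \<le> 1"
    and tb: "real t \<le> 1 / 105408 * \<epsilon> * 2 powr (real d / 4)"
  shows "accept_prob (Tst d t \<epsilon>) f adv \<le> 1 / 3"
proof -
  define m where "m = mN t \<epsilon>"
  define s where "s = sN \<epsilon>"
  have s1: "1 \<le> s" and s2: "60 / \<epsilon> \<le> real s" and s3: "real s \<le> 61 / \<epsilon>"
    using sN_bounds[OF e] by (auto simp: s_def)
  have mdef: "m = 576 * max 1 t * s" by (simp add: m_def mN_def s_def)
  have ms: "4 * s + 2 \<le> m"
  proof -
    have a: "s \<le> max 1 t * s" by simp
    have "4 * s + 2 \<le> 576 * s" using s1 by simp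
    also have "\<dots> \<le> 576 * (max 1 t * s)" using a by simp
    finally show ?thesis unfolding mdef by (simp add: mult.assoc)
  qed
  have ms2: "2 * s \<le> m" using ms by simp
  let ?PP = "pair_pmf (X d m) (selp m s)"
  let ?A1 = "{(x,p). allok f x p}"
  let ?A2 = "{(x,p). \<exists>j<m. x j \<in> Er f adv (map x [0..<j])}"
  let ?A3 = "{(x,p). \<exists>k<length p. p ! k \<in> F3 f adv m x k (take k p)}"
  have "accept_prob (Tst d t \<epsilon>) f adv = measure_pmf.prob ?PP {(x,p). decf m p (answers f adv (qsf m x p))}"
    unfolding accept_eq m_def s_def ..
  also have "\<dots> \<le> measure_pmf.prob ?PP (?A1 \<union> ?A2 \<union> ?A3)"
  proof (rule prob_mono_supp)
    fix xp assume xp: "xp \<in> set_pmf ?PP" and acc: "xp \<in> {(x,p). decf m p (answers f adv (qsf m x p))}"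
    obtain x p where e: "xp = (x,p)" by force
    have p: "p \<in> set_pmf (selp m s)" using xp e by auto
    have "pd {..<m} p" using selp_support[OF ms2 p] by simp
    from accept_cases[OF this, of f adv x] acc e
    show "xp \<in> ?A1 \<union> ?A2 \<union> ?A3" by auto
  qed
  also have "\<dots> \<le> measure_pmf.prob ?PP (?A1 \<union> ?A2) + measure_pmf.prob ?PP ?A3"
    by (rule pmf_union_le)
  also have "\<dots> \<le> measure_pmf.prob ?PP ?A1 + measure_pmf.prob ?PP ?A2 + measure_pmf.prob ?PP ?A3"
    using pmf_union_le[of ?PP ?A1 ?A2] by simp
  also have "\<dots> \<le> qk f d ^ s + real m * (real t * real m / 2 ^ d) +
      (measure_pmf.prob (X d m) {x. t \<noteq> 0 \<and> coll m x} + real s * (16 * real t / real m))"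
    using LA1[OF ms2, of d f] LA2[OF v, of d m s f] LA3[OF v ms, of d f] by linarith
  also have "\<dots> \<le> 1 / 3"
  proof (cases "t = 0")
    case True
    have "qk f d ^ s \<le> 1 / 6" by (rule qk_pow[OF far e s2])
    then show ?thesis using True by simp
  next
    case False
    then have t1: "1 \<le> t" by simp
    have mt: "m = 576 * t * s" using mdef t1 by simp
    define Z where "Z = 2 powr (real d / 4)"
    have Z0: "0 < Z" unfolding Z_def by simp
    have Z4: "Z ^ 4 = 2 ^ d" unfolding Z_def
      by (simp add: powr_power powr_realpow)
    have "real m = 576 * real t * real s" by (simp add: mt)
    also have "\<dots> \<le> 576 * real t * (61 / \<epsilon>)" using s3 by (intro mult_left_mono) auto
    also have "\<dots> = 35136 * (real t / \<epsilon>)" by simp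
    also have "\<dots> \<le> 35136 * (1 / 105408 * Z)"
    proof -
      have "real t / \<epsilon> \<le> 1 / 105408 * Z" using tb e unfolding Z_def by (simp add: divide_le_eq mult.commute mult.left_commute)
      then show ?thesis by (rule mult_left_mono) simp
    qed
    also have "\<dots> = Z / 3" by simp
    finally have mZ: "real m \<le> Z / 3" .
    have m4: "real m ^ 4 \<le> 2 ^ d / 81"
    proof -
      have "real m ^ 4 \<le> (Z / 3) ^ 4" using mZ by (intro power_mono) auto
      also have "\<dots> = 2 ^ d / 81" using Z4 by (simp add: power_divide)
      finally show ?thesis .
    qed
    have "t * 1 \<le> t * (576 * s)" using s1 by (intro mult_left_mono) auto
    then have "t \<le> m" using mt by (simp add: mult.assoc)
    then have tm: "real t \<le> real m" by simp
    have m1: "1 \<le> real m" using ms by simp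
    have T2: "real m * (real t * real m / 2 ^ d) \<le> 1 / 81"
    proof -
      have "real m * (real t * real m) \<le> real m * (real m * real m)" using tm m1 by (intro mult_left_mono mult_right_mono) auto
      also have "\<dots> \<le> real m ^ 4"
      proof -
        have "real m * (real m * real m) * 1 \<le> real m * (real m * real m) * real m" using m1 by (intro mult_left_mono) auto
        then show ?thesis by (simp add: power4_eq_xxxx mult.assoc)
      qed
      also have "\<dots> \<le> 2 ^ d / 81" by (rule m4)
      finally have "real m * (real t * real m) \<le> 2 ^ d / 81" .
      then show ?thesis by (simp add: divide_le_eq field_simps)
    qed
    have T3: "measure_pmf.prob (X d m) {x. t \<noteq> 0 \<and> coll m x} \<le> 1 / 81"
    proof -
      have "measure_pmf.prob (X d m) {x. t \<noteq> 0 \<and> coll m x} \<le> measure_pmf.prob (X d m) {x. coll m x}"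
        by (rule measure_pmf.finite_measure_mono) auto
      also have "\<dots> \<le> real m ^ 4 / 2 ^ d" by (rule PL2)
      also have "\<dots> \<le> 1 / 81" using m4 by (simp add: divide_le_eq)
      finally show ?thesis .
    qed
    have T4: "real s * (16 * real t / real m) = 1 / 36"
      using t1 s1 by (simp add: mt field_simps)
    have T1: "qk f d ^ s \<le> 1 / 6" by (rule qk_pow[OF far e s2])
    show ?thesis using T1 T2 T3 T4 by linarith
  qed
  finally show ?thesis .
qed

theorem theoremB1:
  shows "\<exists>c0::real. 0 < c0 \<and> c0 < 1 \<and>
    (\<exists>C::real. \<exists>T :: nat \<Rightarrow> nat \<Rightarrow> real \<Rightarrow> nonadaptive_alg.
      \<forall>d t \<epsilon>. 0 < \<epsilon> \<and> \<epsilon> \<le> 1 \<longrightarrow>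
        (\<forall>(qs, dec) \<in> set_pmf (T d t \<epsilon>).
            set qs \<subseteq> cube d \<and> real (length qs) \<le> C * real (max 1 t) / \<epsilon>) \<and>
        (real t \<le> c0 * \<epsilon> * 2 powr (real d / 4) \<longrightarrow>
          (\<forall>f adv. valid_adversary t adv \<longrightarrow>
             (is_linear_fn d f \<longrightarrow> accept_prob (T d t \<epsilon>) f adv = 1) \<and>
             (eps_far_linear \<epsilon> d f \<longrightarrow> accept_prob (T d t \<epsilon>) f adv \<le> 1 / 3))))"
  apply (rule exI[of _ "1 / 105408 :: real"])
  apply (intro conjI)
    apply simp
   apply simp
  apply (rule exI[of _ "35197 :: real"])
  apply (rule exI[of _ Tst])
  apply (intro allI impI conjI ballI)
  subgoal for d t \<epsilon> x
    using main_support[of \<epsilon> "fst x" "snd x" d t] by (cases x) auto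
  subgoal for d t \<epsilon> f adv
    using main_linear by blast
  subgoal for d t \<epsilon> f adv
    using main_far by blast
  done


end
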